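(* Let $n\ge3$, $U\ge3$, run the modified chain $(X_t)$ started at $X_1=a$, and consider its transitions at times $1,\dots,4n-1$. For a state $b$, let $T(a,b)$ be the event that $X_{4n}=b$ and no major self-loop is taken at any of the states $1,1',n,n'$ during these transitions. For a state $j$, let $T'(a,j)$ be the event that during these transitions no major self-loop is taken at $1,1',n,n'$ and exactly one switching link is taken, at state $j$. Let $L_k$ be the event that exactly $k$ major self-loops are taken during these transitions. If $0\le k\le 2n-2$ and $k\equiv p(b)-p(a)\pmod 2$, then there exists a state $j$ (depending on $a,b,k$) such that $$T'(a,j)\cap L_k\subseteq T(a,b)\cap L_k.$$
   Context: Let $n\ge3$, $U\ge3$ be integers. The "modified chain" is a Markov chain on the $2n$ states $\{1,\dots,n,1',\dots,n'\}$ whose transitions are labeled edges (a multigraph). Every state has exactly three outgoing edges: a "major self-loop" with probability $1/2$, a "continuing link" with probability $\frac12(1-\frac1U)$, and a "switching link" with probability $\frac1{2U}$. Continuing links: $i\to i+1$ for $1\le i\le n-1$, $n\to n'$, $i'\to(i-1)'$ for $2\le i\le n$, $1'\to1$. Switching links: $i\to(i+1)'$ for $1\le i\le n-1$, $n\to n$, $i'\to i-1$ for $2\le i\le n$, $1'\to1'$ (at $n$ and $1'$ the switching link is a self-loop distinct from the major self-loop). The circular position of a state is $p(i)=i$ and $p(i')=2n+1-i$ for $1\le i\le n$, considered modulo $2n$. *)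

theory Defs
  imports Complex_Main
begin

text \<open>States of the modified chain: (i, False) is state i, (i, True) is state i',
  for 1 \<le> i \<le> n.  Every state has three labelled outgoing edges.\<close>

type_synonym mstate = "nat \<times> bool"

datatype link = Major | Cont | Switch

definition states :: "nat \<Rightarrow> mstate set" where
  "states n = {(i, b). 1 \<le> i \<and> i \<le> n}"

fun step :: "nat \<Rightarrow> mstate \<Rightarrow> link \<Rightarrow> mstate" where
  "step n s Major = s"
| "step n (i, False) Cont = (if i < n then (i + 1, False) else (n, True))"
| "step n (i, True) Cont = (if 2 \<le> i then (i - 1, True) else (1, False))"
| "step n (i, False) Switch = (if i < n then (i + 1, True) else (n, False))"
| "step n (i, True) Switch = (if 2 \<le> i then (i - 1, False) else (1, True))"

definition link_prob :: "nat \<Rightarrow> link \<Rightarrow> real" where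
  "link_prob U l = (case l of Major \<Rightarrow> 1/2 | Cont \<Rightarrow> (1/2) * (1 - 1 / real U)
                             | Switch \<Rightarrow> 1 / (2 * real U))"

fun pos :: "nat \<Rightarrow> mstate \<Rightarrow> int" where
  "pos n (i, False) = int i"
| "pos n (i, True) = 2 * int n + 1 - int i"

text \<open>Trajectory X_1, X_2, ... determined by the start state and the sequence of
  links taken; element t (0-based) of the list is X_(t+1).\<close>
fun traj :: "nat \<Rightarrow> mstate \<Rightarrow> link list \<Rightarrow> mstate list" where
  "traj n a [] = [a]"
| "traj n a (l # ls) = a # traj n (step n a l) ls"

definition special :: "nat \<Rightarrow> mstate set" where
  "special n = {(1, False), (1, True), (n, False), (n, True)}"

text \<open>Sample outcomes: sequences of the links taken at times 1, ..., 4n-1.\<close>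
definition outcomes :: "nat \<Rightarrow> link list set" where
  "outcomes n = {ls. length ls = 4 * n - 1}"

definition no_major_special :: "nat \<Rightarrow> mstate \<Rightarrow> link list \<Rightarrow> bool" where
  "no_major_special n a ls =
     (\<forall>t < length ls. ls ! t = Major \<longrightarrow> traj n a ls ! t \<notin> special n)"

definition evT :: "nat \<Rightarrow> mstate \<Rightarrow> mstate \<Rightarrow> link list set" where
  "evT n a b = {ls \<in> outcomes n. last (traj n a ls) = b \<and> no_major_special n a ls}"

definition evT' :: "nat \<Rightarrow> mstate \<Rightarrow> mstate \<Rightarrow> link list set" where
  "evT' n a j = {ls \<in> outcomes n. no_major_special n a ls
      \<and> card {t. t < length ls \<and> ls ! t = Switch} = 1
      \<and> (\<forall>t < length ls. ls ! t = Switch \<longrightarrow> traj n a ls ! t = j)}"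

definition evL :: "nat \<Rightarrow> nat \<Rightarrow> link list set" where
  "evL n k = {ls \<in> outcomes n. card {t. t < length ls \<and> ls ! t = Major} = k}"

end

theory Submission
  imports Defs
begin

lemma step_states:
  assumes "s \<in> states n" shows "step n s l \<in> states n"
proof -
  obtain i c where "s = (i,c)" by (cases s)
  thus ?thesis using assms by (cases c; cases l; auto simp: states_def)
qed

lemma step_cont:
  assumes "s \<in> states n" shows "int (2*n) dvd (pos n (step n s Cont) - pos n s - 1)"
proof -
  obtain i c where s: "s = (i,c)" by (cases s)
  have i: "1 \<le> i" "i \<le> n" using assms s by (auto simp: states_def)
  show ?thesis
  proof (cases c)
    case True
    show ?thesis
    proof (cases "2 \<le> i")
      case True with \<open>c\<close> s i show ?thesis by auto
    next
      case False
      hence "i = 1" using i by auto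
      with \<open>c\<close> s show ?thesis by (simp add: dvd_def) (rule exI[of _ "-1"], simp)
    qed
  next
    case False
    with s i show ?thesis by (cases "i < n") auto
  qed
qed

lemma step_switch:
  assumes "s \<in> states n" shows "int (2*n) dvd (pos n (step n s Switch) + pos n s)"
proof -
  obtain i c where s: "s = (i,c)" by (cases s)
  have i: "1 \<le> i" "i \<le> n" using assms s by (auto simp: states_def)
  show ?thesis
  proof (cases c)
    case True
    show ?thesis
    proof (cases "2 \<le> i")
      case True with \<open>c\<close> s i show ?thesis by (auto simp: of_nat_diff)
    next
      case False
      hence "i = 1" using i by auto
      with \<open>c\<close> s show ?thesis by simp
    qed
  next
    case False
    with s i show ?thesis by (cases "i < n") (auto simp: of_nat_diff)
  qed
qed

lemma pos_range:
  assumes "s \<in> states n" shows "1 \<le> pos n s \<and> pos n s \<le> 2 * int n"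
  using assms by (cases s; cases "snd s"; auto simp: states_def)

lemma pos_inj:
  assumes "s \<in> states n" "t \<in> states n" "int (2*n) dvd (pos n s - pos n t)"
  shows "s = t"
proof -
  have "pos n s = pos n t"
  proof (rule ccontr)
    assume ne: "pos n s \<noteq> pos n t"
    obtain m where m: "pos n s - pos n t = int (2*n) * m" using assms(3) by (auto simp: dvd_def)
    have "m \<noteq> 0" using ne m by auto
    hence "\<bar>int (2*n) * m\<bar> \<ge> int (2*n)"
      using assms(1) by (cases s) (simp add: abs_mult mult_le_cancel_left1 states_def)
    moreover have "\<bar>pos n s - pos n t\<bar> < 2 * int n" using pos_range[OF assms(1)] pos_range[OF assms(2)] by auto
    ultimately show False using m by simp
  qed
  thus ?thesis using assms(1,2)
    by (cases s; cases t; cases "snd s"; cases "snd t"; auto simp: states_def)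
qed

lemma noswitch:
  assumes "a \<in> states n" "Switch \<notin> set ys"
  shows "last (traj n a ys) \<in> states n \<and>
    int (2*n) dvd (pos n (last (traj n a ys)) - pos n a - int (length (filter (\<lambda>l. l = Cont) ys)))"
  using assms
proof (induction ys arbitrary: a)
  case Nil thus ?case by simp
next
  case (Cons l ys)
  have st: "step n a l \<in> states n" using step_states Cons.prems by blast
  have IH: "last (traj n (step n a l) ys) \<in> states n \<and>
    int (2*n) dvd (pos n (last (traj n (step n a l) ys)) - pos n (step n a l) - int (length (filter (\<lambda>l. l = Cont) ys)))"
    using Cons st by auto
  have lt: "last (traj n a (l # ys)) = last (traj n (step n a l) ys)"
    by (cases ys) auto
  show ?case
  proof (cases l)
    case Major thus ?thesis using IH lt by simp
  next
    case Switch thus ?thesis using Cons.prems by simp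
  next
    case Cont
    have "int (2*n) dvd (pos n (step n a l) - pos n a - 1)" using step_cont Cons.prems Cont by blast
    from dvd_add[OF IH[THEN conjunct2] this] show ?thesis using IH lt Cont by (simp add: algebra_simps)
  qed
qed

lemma traj_ne[simp]: "traj n a ls \<noteq> []"
  by (cases ls) auto

lemma traj_len: "length (traj n a ls) = Suc (length ls)"
  by (induction ls arbitrary: a) auto

lemma traj_append:
  "last (traj n a (xs @ ys)) = last (traj n (last (traj n a xs)) ys) \<and>
   traj n a (xs @ ys) ! length xs = last (traj n a xs)"
proof (induction xs arbitrary: a)
  case Nil thus ?case by (cases ys) auto
next
  case (Cons x xs)
  have e: "last (traj n a (x # zs)) = last (traj n (step n a x) zs)" for zs
    by (cases zs) auto
  show ?case using Cons[of "step n a x"] e[of "xs @ ys"] e[of xs] by simp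
qed

lemma filter_split:
  assumes "Switch \<notin> set xs"
  shows "length (filter (\<lambda>l. l = Cont) xs) + length (filter (\<lambda>l. l = Major) xs) = length xs"
  using assms by (induction xs) (auto, metis link.exhaust)

theorem lemma10:
  fixes n U k :: nat and a b :: mstate
  assumes "n \<ge> 3" and "U \<ge> 3"
    and "a \<in> states n" and "b \<in> states n"
    and "k \<le> 2 * n - 2"
    and "int k mod 2 = (pos n b - pos n a) mod 2"
  shows "\<exists>j \<in> states n. evT' n a j \<inter> evL n k \<subseteq> evT n a b \<inter> evL n k"
proof -
  define d where "d = pos n a - 2 - int k - pos n b"
  have ev: "even d" using assms(6) unfolding d_def
    by (metis dvd_minus_mod even_add even_diff even_of_nat odd_one even_numeral
        mod_0 mod_diff_right_eq diff_diff_eq)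
  define r where "r = (d div 2) mod int n"
  have r: "0 \<le> r" "r < int n" using assms(1) by (auto simp: r_def)
  define P where "P = (if r = 0 then n else nat r)"
  define j where "j = (P, False)"
  have jst: "j \<in> states n" using r by (auto simp: j_def P_def states_def)
  have d2: "d = 2 * (d div 2)" using ev by simp
  have Pd: "int (2*n) dvd (2 * int P - d)"
  proof -
    have "int n dvd (int P - d div 2)"
      using r unfolding P_def r_def
      by (auto simp: mod_eq_dvd_iff[symmetric] dvd_def[symmetric])
    then obtain m where "int P - d div 2 = int n * m" by (auto simp: dvd_def)
    hence "2 * int P - d = int (2*n) * m" using d2 by (simp add: algebra_simps)
    thus ?thesis by simp
  qed
  show ?thesis
  proof (intro bexI[OF _ jst] subsetI)
    fix ls assume ls: "ls \<in> evT' n a j \<inter> evL n k"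
    have len: "length ls = 4*n - 1" and nms: "no_major_special n a ls"
      and c1: "card {t. t < length ls \<and> ls ! t = Switch} = 1"
      and sw: "\<forall>t < length ls. ls ! t = Switch \<longrightarrow> traj n a ls ! t = j"
      and km: "card {t. t < length ls \<and> ls ! t = Major} = k"
      using ls by (auto simp: evT'_def evL_def outcomes_def)
    obtain s where S: "{t. t < length ls \<and> ls ! t = Switch} = {s}"
      using c1 card_1_singletonE by blast
    have slt: "s < length ls" "ls ! s = Switch" using S by auto
    define xs where "xs = take s ls"
    define ys where "ys = drop (Suc s) ls"
    have lsd: "ls = xs @ Switch # ys" using slt unfolding xs_def ys_def
      by (metis id_take_nth_drop)
    have lxs: "length xs = s" using slt by (simp add: xs_def)
    have nx: "Switch \<notin> set xs"
    proof
      assume "Switch \<in> set xs"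
      then obtain t where t: "t < length xs" "xs ! t = Switch" by (auto simp: in_set_conv_nth)
      hence "t \<in> {t. t < length ls \<and> ls ! t = Switch}" using slt lxs by (auto simp: xs_def)
      thus False using S t lxs by auto
    qed
    have ny: "Switch \<notin> set ys"
    proof
      assume "Switch \<in> set ys"
      then obtain t where t: "t < length ys" "ys ! t = Switch" by (auto simp: in_set_conv_nth)
      hence "Suc s + t \<in> {t. t < length ls \<and> ls ! t = Switch}" using slt by (auto simp: ys_def)
      thus False using S by auto
    qed
    have mk: "length (filter (\<lambda>l. l = Major) xs) + length (filter (\<lambda>l. l = Major) ys) = k"
    proof -
      have "length (filter (\<lambda>l. l = Major) ls) = k"
        using km by (simp add: length_filter_conv_card)
      thus ?thesis unfolding lsd by simp
    qed
    have lsum: "length xs + length ys = 4*n - 2" using len lsd by simp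
    define q where "q = last (traj n a xs)"
    define rr where "rr = step n q Switch"
    define f where "f = last (traj n rr ys)"
    have T: "last (traj n a ls) = f" and Tq: "traj n a ls ! s = q"
      using traj_append[of n a xs "Switch # ys"] lxs unfolding lsd f_def rr_def q_def
      by auto
    have qj: "q = j" using sw slt Tq by auto
    have H1: "q \<in> states n" "int (2*n) dvd (pos n q - pos n a - int (length (filter (\<lambda>l. l = Cont) xs)))"
      using noswitch[OF assms(3) nx] q_def by auto
    have rst: "rr \<in> states n" using step_states H1(1) rr_def by blast
    have H2: "int (2*n) dvd (pos n rr + pos n q)" using step_switch H1(1) rr_def by blast
    have H3: "f \<in> states n" "int (2*n) dvd (pos n f - pos n rr - int (length (filter (\<lambda>l. l = Cont) ys)))"
      using noswitch[OF rst ny] f_def by auto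
    have sx: "length (filter (\<lambda>l. l = Cont) xs) + length (filter (\<lambda>l. l = Major) xs) = length xs"
      using filter_split[OF nx] .
    have sy: "length (filter (\<lambda>l. l = Cont) ys) + length (filter (\<lambda>l. l = Major) ys) = length ys"
      using filter_split[OF ny] .
    have cc: "int (length (filter (\<lambda>l. l = Cont) xs)) + int (length (filter (\<lambda>l. l = Cont) ys))
       = 4 * int n - 2 - int k"
      using sx sy mk lsum assms(1) by linarith
    have pq: "pos n q = int P" using qj by (simp add: j_def)
    have eq: "pos n f - pos n b =
       (pos n f - pos n rr - int (length (filter (\<lambda>l. l = Cont) ys)))
       + (pos n rr + pos n q)
       + (pos n q - pos n a - int (length (filter (\<lambda>l. l = Cont) xs)))
       + int (2*n) * 2 - (2 * int P - d)"
      using cc pq unfolding d_def by simp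
    have "int (2*n) dvd (pos n f - pos n b)"
      unfolding eq by (intro dvd_add dvd_diff H1(2) H2 H3(2) Pd) simp
    hence "f = b" using pos_inj H3(1) assms(4) by blast
    thus "ls \<in> evT n a b \<inter> evL n k"
      using ls T nms by (auto simp: evT_def evT'_def)
  qed
qed

end
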